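(* Let $m$ and $n$ be non-negative integers with $m+n\ge1$. Then the rational number $$\binom{m+n}{m}\binom{n+1}{m}\binom{2n}{n}\frac{3m^2+n^2+m+n}{(m+n)(n+1)}$$ is an integer divisible by $m+n+1$.
   Context: Binomial coefficients $\binom{a}{b}$ with $b>a\ge 0$ are zero. *)

theory Defs
  imports Complex_Main
begin

end

theory Submission
  imports Defs
begin
lemma algR:
  fixes p r P R Q U W a b c d e f g :: rat
  assumes nz: "P \<noteq> 0" "R \<noteq> 0" "Q \<noteq> 0" "U \<noteq> 0" "W \<noteq> 0"
   "a \<noteq> 0" "b \<noteq> 0" "c \<noteq> 0" "d \<noteq> 0" "e \<noteq> 0" "f \<noteq> 0" "g \<noteq> 0"
  and eq: "a = p+1" "b = r+1" "c = r+2" "d = p+r+2" "e = p+r+3" "f = 2*p+r+3" "g = 2*p+r+4"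
  shows "(f*U / (a*P * (d*Q))) * (e*d*Q / (a*P * (c*b*R)))
     * (W / (d*Q * (d*Q)))
     * ((3*a^2 + d^2 + a + d) / (f * e))
   = g * (
      (U/(a*P*Q))^2 * (W/(b*R*(f*U)) - W/(R*(g*f*U)))
    + 2*(U/(a*P*Q))*(U/(P*(d*Q))) * (W/(b*R*(f*U)) - W/(R*(g*f*U)) - W/(c*b*R*U))
    + (U/(P*(d*Q)))^2 * (2*(W/(c*b*R*U)) + W/(b*R*(f*U)) - W/(R*(g*f*U))))"
  apply (simp add: field_simps nz)
  apply (simp only: eq)
  apply algebra
  done

lemma bf: "k \<le> N \<Longrightarrow> N = X \<Longrightarrow> k = Y \<Longrightarrow> N - k = Z \<Longrightarrow> (of_nat (N choose k)::rat) = fact X/(fact Y*fact Z)"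
  using binomial_fact[of k N] by simp

lemma caseR:
  fixes m n p r :: nat
  assumes mn: "m = Suc p" "n = p + r + 2"
  shows "(of_nat ((m + n) choose m) * of_nat ((n + 1) choose m) * of_nat ((2 * n) choose n)
       * (of_nat (3 * m^2 + n^2 + m + n) / (of_nat (m + n) * of_nat (n + 1))) :: rat)
    = of_int (int (m + n + 1) * (
        (int ((2*p+r+2) choose (p+1)))^2 * (int ((2*p+2*r+4) choose (r+1)) - int ((2*p+2*r+4) choose r))
      + 2 * int ((2*p+r+2) choose (p+1)) * int ((2*p+r+2) choose p) *
          (int ((2*p+2*r+4) choose (r+1)) - int ((2*p+2*r+4) choose r) - int ((2*p+2*r+4) choose (r+2)))
      + (int ((2*p+r+2) choose p))^2 * (2 * int ((2*p+2*r+4) choose (r+2)) + int ((2*p+2*r+4) choose (r+1)) - int ((2*p+2*r+4) choose r))))"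
proof -
  define P :: rat where "P = fact p"
  define R :: rat where "R = fact r"
  define Q :: rat where "Q = fact (p+r+1)"
  define U :: rat where "U = fact (2*p+r+2)"
  define W :: rat where "W = fact (2*p+2*r+4)"
  define a :: rat where "a = of_nat (p) + 1"
  define b :: rat where "b = of_nat (r) + 1"
  define c :: rat where "c = of_nat (r+1) + 1"
  define d :: rat where "d = of_nat (p+r+1) + 1"
  define e :: rat where "e = of_nat (p+r+2) + 1"
  define f :: rat where "f = of_nat (2*p+r+2) + 1"
  define g :: rat where "g = of_nat (2*p+r+3) + 1"
  have fA: "\<And>k j. j = k+1 \<Longrightarrow> (fact j :: rat) = (of_nat k + 1) * fact k"
    by (simp add: algebra_simps)
  have F1: "(fact (Suc p) :: rat) = a * P"
    using fA[of "Suc p" "p"] unfolding a_def P_def Q_def R_def U_def by simp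
  have F2: "(fact (p+r+2) :: rat) = d * Q"
    using fA[of "p+r+2" "p+r+1"] unfolding d_def P_def Q_def R_def U_def by simp
  have F3: "(fact (p+r+3) :: rat) = e * d * Q"
    using fA[of "p+r+3" "p+r+2"] F2 unfolding e_def by simp
  have F4: "(fact (r+1) :: rat) = b * R"
    using fA[of "r+1" "r"] unfolding b_def P_def Q_def R_def U_def by simp
  have F5: "(fact (r+2) :: rat) = c * b * R"
    using fA[of "r+2" "r+1"] F4 unfolding c_def by simp
  have F6: "(fact (2*p+r+3) :: rat) = f * U"
    using fA[of "2*p+r+3" "2*p+r+2"] unfolding f_def P_def Q_def R_def U_def by simp
  have F7: "(fact (2*p+r+4) :: rat) = g * f * U"
    using fA[of "2*p+r+4" "2*p+r+3"] F6 unfolding g_def by simp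
  have B1: "(of_nat ((m + n) choose m) :: rat) = f*U / (a*P * (d*Q))"
  proof -
    have "(of_nat ((m + n) choose m) :: rat) = fact (2*p+r+3) / (fact (Suc p) * fact (p+r+2))"
      by (rule bf) (use mn in simp_all)
    also have "\<dots> = f*U / (a*P * (d*Q))" by (simp only: F6 F1 F2 P_def R_def Q_def U_def W_def)
    finally show ?thesis .
  qed
  have B2: "(of_nat ((n + 1) choose m) :: rat) = e*d*Q / (a*P * (c*b*R))"
  proof -
    have "(of_nat ((n + 1) choose m) :: rat) = fact (p+r+3) / (fact (Suc p) * fact (r+2))"
      by (rule bf) (use mn in simp_all)
    also have "\<dots> = e*d*Q / (a*P * (c*b*R))" by (simp only: F3 F1 F5 P_def R_def Q_def U_def W_def)
    finally show ?thesis .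
  qed
  have B3: "(of_nat ((2 * n) choose n) :: rat) = W / (d*Q * (d*Q))"
  proof -
    have "(of_nat ((2 * n) choose n) :: rat) = fact (2*p+2*r+4) / (fact (p+r+2) * fact (p+r+2))"
      by (rule bf) (use mn in simp_all)
    also have "\<dots> = W / (d*Q * (d*Q))" by (simp only: F2 P_def R_def Q_def U_def W_def)
    finally show ?thesis .
  qed
  have BA: "(of_nat ((2*p+r+2) choose (p+1)) :: rat) = U/(a*P*Q)"
  proof -
    have "(of_nat ((2*p+r+2) choose (p+1)) :: rat) = fact (2*p+r+2) / (fact (Suc p) * fact (p+r+1))"
      by (rule bf) (use mn in simp_all)
    also have "\<dots> = U/(a*P*Q)" by (simp only: F1 P_def R_def Q_def U_def W_def)
    finally show ?thesis .
  qed
  have BB: "(of_nat ((2*p+r+2) choose p) :: rat) = U/(P*(d*Q))"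
  proof -
    have "(of_nat ((2*p+r+2) choose p) :: rat) = fact (2*p+r+2) / (fact (p) * fact (p+r+2))"
      by (rule bf) (use mn in simp_all)
    also have "\<dots> = U/(P*(d*Q))" by (simp only: F2 P_def R_def Q_def U_def W_def)
    finally show ?thesis .
  qed
  have D0: "(of_nat ((2*p+2*r+4) choose (r+1)) :: rat) = W/(b*R*(f*U))"
  proof -
    have "(of_nat ((2*p+2*r+4) choose (r+1)) :: rat) = fact (2*p+2*r+4) / (fact (r+1) * fact (2*p+r+3))"
      by (rule bf) (use mn in simp_all)
    also have "\<dots> = W/(b*R*(f*U))" by (simp only: F4 F6 P_def R_def Q_def U_def W_def)
    finally show ?thesis .
  qed
  have D1: "(of_nat ((2*p+2*r+4) choose r) :: rat) = W/(R*(g*f*U))"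
  proof -
    have "(of_nat ((2*p+2*r+4) choose r) :: rat) = fact (2*p+2*r+4) / (fact (r) * fact (2*p+r+4))"
      by (rule bf) (use mn in simp_all)
    also have "\<dots> = W/(R*(g*f*U))" by (simp only: F7 P_def R_def Q_def U_def W_def)
    finally show ?thesis .
  qed
  have Dm: "(of_nat ((2*p+2*r+4) choose (r+2)) :: rat) = W/(c*b*R*U)"
  proof -
    have "(of_nat ((2*p+2*r+4) choose (r+2)) :: rat) = fact (2*p+2*r+4) / (fact (r+2) * fact (2*p+r+2))"
      by (rule bf) (use mn in simp_all)
    also have "\<dots> = W/(c*b*R*U)" by (simp only: F5 P_def R_def Q_def U_def W_def)
    finally show ?thesis .
  qed
  have nz: "P \<noteq> 0" "R \<noteq> 0" "Q \<noteq> 0" "U \<noteq> 0" "W \<noteq> 0"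
   "a \<noteq> 0" "b \<noteq> 0" "c \<noteq> 0" "d \<noteq> 0" "e \<noteq> 0" "f \<noteq> 0" "g \<noteq> 0"
    unfolding P_def R_def Q_def U_def W_def a_def b_def c_def d_def e_def f_def g_def
    by (simp_all add: add_nonneg_eq_0_iff)
  have eq: "a = of_nat p+1" "b = of_nat r+1" "c = of_nat r+2" "d = of_nat p+of_nat r+2"
     "e = of_nat p+of_nat r+3" "f = 2*of_nat p+of_nat r+3" "g = 2*of_nat p+of_nat r+4"
    unfolding a_def b_def c_def d_def e_def f_def g_def by simp_all
  note key = algR[OF nz eq]
  have S: "(of_nat (3 * m^2 + n^2 + m + n) :: rat) = 3*a^2 + d^2 + a + d"
    "(of_nat (m+n) :: rat) = f" "(of_nat (n+1) :: rat) = e" "(of_nat (m+n+1) :: rat) = g"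
    unfolding mn eq by (simp_all add: algebra_simps)
  show ?thesis
    unfolding of_int_mult of_int_add of_int_diff of_int_power of_int_of_nat_eq of_int_numeral
      B1 B2 B3 BA BB D0 D1 Dm S
    by (rule key)
qed
lemma catl: "Suc p * ((2*p) choose (Suc p)) = p * ((2*p) choose p)"
proof -
  have 1: "Suc p * ((2*p) choose (Suc p)) = (2*p) * ((2*p - 1) choose p)" by (rule binomial_absorption)
  have 2: "(2*p - p) * ((2*p) choose p) = (2*p) * ((2*p - 1) choose p)" by (rule binomial_absorb_comp)
  have 3: "2*p - p = p" by simp
  show ?thesis using 1 2 unfolding 3 by metis
qed

lemma case0:
  fixes n :: nat assumes "n \<ge> 1"
  shows "(of_nat ((0 + n) choose 0) * of_nat ((n + 1) choose 0) * of_nat ((2 * n) choose n)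
       * (of_nat (3 * 0^2 + n^2 + 0 + n) / (of_nat (0 + n) * of_nat (n + 1))) :: rat)
    = of_int (int (0 + n + 1) * (int ((2*n) choose n) - int ((2*n) choose (Suc n))))"
proof -
  define X where "X = (2*n) choose n"
  define Y where "Y = (2*n) choose (Suc n)"
  have c: "(of_nat (Suc n) * of_nat Y :: rat) = of_nat n * of_nat X"
    using arg_cong[OF catl[of n], where f = "of_nat :: nat \<Rightarrow> rat"] unfolding X_def Y_def by (simp only: of_nat_mult)
  have n0: "(of_nat n :: rat) \<noteq> 0" using assms by simp
  have n1: "(of_nat n + 1 :: rat) \<noteq> 0" by (metis of_nat_Suc of_nat_eq_0_iff Suc_neq_Zero add.commute)
  have S: "(of_nat (3 * 0^2 + n^2 + 0 + n) :: rat) = of_nat n * (of_nat n + 1)" by (simp add: power2_eq_square algebra_simps)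
  have XY: "(of_nat X :: rat) = (of_nat n + 1) * (of_nat X - of_nat Y)" using c by (simp add: algebra_simps)
  have D: "(of_nat (0+n) * of_nat (n+1) :: rat) = of_nat n * (of_nat n + 1)" by simp
  have q: "(of_nat n * (of_nat n + 1)) / (of_nat n * (of_nat n + 1)) = (1::rat)" using n0 n1 by simp
  show ?thesis unfolding X_def[symmetric] Y_def[symmetric] S D q
    using XY by (simp add: algebra_simps)
qed

lemma algQ0:
  fixes p X Y Z K S F E G :: rat
  assumes nz: "F \<noteq> 0" "E \<noteq> 0"
    and eq: "E = p + 1" "F = 2*p+1" "E*Z = F*X" "E*Y = p*X" "K = 1" "S = 4*(p+1)^2" "G = 2*p+2"
  shows "Z * K * X * (S / (F * E)) = G * (2*X*(X - Y))"
proof -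
  have h1: "(p+1)*Z = (2*p+1)*X" "(p+1)*Y = p*X" using eq by simp_all
  have "Z * 1 * X * (4*(p+1)^2) = (2*p+2) * (2*X*(X - Y)) * ((2*p+1)*(p+1))"
  proof -
    have "Z * 1 * X * (4*(p+1)^2) = 4*X*(p+1)*((p+1)*Z)" by (simp add: power2_eq_square algebra_simps)
    also have "\<dots> = 4*X*(p+1)*((2*p+1)*X)" using h1 by simp
    also have "\<dots> = (2*p+2) * (2*X*((p+1)*X - (p+1)*Y)) * (2*p+1)" using h1 by (simp add: algebra_simps)
    also have "\<dots> = (2*p+2) * (2*X*(X - Y)) * ((2*p+1)*(p+1))" by (simp add: algebra_simps)
    finally show ?thesis .
  qed
  then have "Z * K * X * S = G * (2*X*(X - Y)) * (F*E)" using eq by simp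
  then show ?thesis using nz by (simp add: field_simps)
qed

lemma algQ1:
  fixes p X Z K S F E G :: rat
  assumes nz: "F \<noteq> 0" "E \<noteq> 0"
    and eq: "E = p + 2" "F = 2*p+2" "Z = 2*X" "K = p+2" "S = 2*(p+1)*(2*p+3)" "G = 2*p+3"
  shows "Z * K * Z * (S / (F * E)) = G * (4*X^2)"
proof -
  have "Z * K * Z * S = G * (4*X^2) * (F*E)"
    unfolding eq by (simp add: power2_eq_square algebra_simps)
  then show ?thesis using nz by (simp add: field_simps)
qed

lemma caseQ0:
  fixes m n p :: nat
  assumes mn: "m = Suc p" "n = p"
  shows "(of_nat ((m + n) choose m) * of_nat ((n + 1) choose m) * of_nat ((2 * n) choose n)
       * (of_nat (3 * m^2 + n^2 + m + n) / (of_nat (m + n) * of_nat (n + 1))) :: rat)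
    = of_int (int (m + n + 1) * (2 * int ((2*p) choose p) * (int ((2*p) choose p) - int ((2*p) choose (Suc p)))))"
proof -
  define X where "X = (2*p) choose p"
  define Y where "Y = (2*p) choose (Suc p)"
  define Z where "Z = (Suc (2*p)) choose (Suc p)"
  have c: "(of_nat (Suc p) * of_nat Y :: rat) = of_nat p * of_nat X"
    using arg_cong[OF catl[of p], where f = "of_nat :: nat \<Rightarrow> rat"] unfolding X_def Y_def by (simp only: of_nat_mult)
  have c2: "(of_nat (Suc p) * of_nat Z :: rat) = of_nat (Suc (2*p)) * of_nat X"
    using arg_cong[OF Suc_times_binomial[of p "2*p"], where f = "of_nat :: nat \<Rightarrow> rat"] unfolding X_def Z_def by (simp only: of_nat_mult)
  have e: "m + n = Suc (2*p)" "n + 1 = Suc p" "2*n = 2*p" "n = p" "m = Suc p" using mn by simp_all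
  have S: "(of_nat (3 * m^2 + n^2 + m + n) :: rat) = 4 * (of_nat p + 1)^2" unfolding mn
    by (simp add: power2_eq_square algebra_simps)
  have p1: "(of_nat p + 1 :: rat) \<noteq> 0" by (metis of_nat_Suc of_nat_eq_0_iff Suc_neq_Zero add.commute)
  have p2: "(2 * of_nat p + 1 :: rat) \<noteq> 0" by (metis of_nat_Suc of_nat_eq_0_iff Suc_neq_Zero add.commute of_nat_mult of_nat_numeral)
  have B: "(m + n) choose m = Z" "(n + 1) choose m = 1" "(2 * n) choose n = X" "(2*p) choose p = X"
     "(2*p) choose (Suc p) = Y"
    unfolding X_def Y_def Z_def mn by (simp_all del: binomial_Suc_Suc add: mult_2)
  have D: "(of_nat (m + n) :: rat) = 2 * of_nat p + 1" "(of_nat (n+1) :: rat) = of_nat p + 1"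
     "int (m+n+1) = 2 * int p + 2" unfolding mn by simp_all
  have S2: "(of_nat (3 * m^2 + n^2 + m + n) :: rat) = 4 * (of_nat p + 1)^2" using S .
  show ?thesis unfolding S B D
    unfolding of_int_mult of_int_diff of_int_of_nat_eq of_int_add of_int_numeral
    apply (unfold of_nat_1)
    apply (rule algQ0[where p="of_nat p"])
    subgoal by (rule p2)
    subgoal by (rule p1)
    subgoal by (rule refl)
    subgoal by (rule refl)
    subgoal using c2 by (simp add: add.commute)
    subgoal using c by (simp add: add.commute)
    subgoal by simp
    subgoal by simp
    subgoal by simp
    done
qed

lemma caseQ1:
  fixes m n p :: nat
  assumes mn: "m = Suc p" "n = Suc p"
  shows "(of_nat ((m + n) choose m) * of_nat ((n + 1) choose m) * of_nat ((2 * n) choose n)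
       * (of_nat (3 * m^2 + n^2 + m + n) / (of_nat (m + n) * of_nat (n + 1))) :: rat)
    = of_int (int (m + n + 1) * (4 * (int ((Suc (2*p)) choose p))^2))"
proof -
  define X where "X = (Suc (2*p)) choose p"
  define Z where "Z = (Suc (Suc (2*p))) choose (Suc p)"
  have c2: "(of_nat (Suc p) * of_nat Z :: rat) = of_nat (Suc (Suc (2*p))) * of_nat X"
    using arg_cong[OF Suc_times_binomial[of p "Suc (2*p)"], where f = "of_nat :: nat \<Rightarrow> rat"] unfolding X_def Z_def by (simp only: of_nat_mult)
  have e: "m + n = Suc (Suc (2*p))" "2 * n = Suc (Suc (2*p))" "n + 1 = Suc (Suc p)" "n = Suc p" "m = Suc p" using mn by simp_all
  have S: "(of_nat (3 * m^2 + n^2 + m + n) :: rat) = 2 * (of_nat p + 1) * (2 * of_nat p + 3)" unfolding mn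
    by (simp add: power2_eq_square algebra_simps)
  have b: "Suc (Suc p) choose Suc p = Suc (Suc p)" by simp
  have p1: "(of_nat p + 1 :: rat) \<noteq> 0" by (metis of_nat_Suc of_nat_eq_0_iff Suc_neq_Zero add.commute)
  have Zv: "(of_nat Z :: rat) = 2 * of_nat X"
  proof -
    have "(of_nat (Suc p) * of_nat Z :: rat) = of_nat (Suc p) * (2 * of_nat X)" using c2 by (simp add: algebra_simps)
    then show ?thesis using p1 by simp
  qed
  have B: "(m + n) choose m = Z" "(n + 1) choose m = Suc (Suc p)" "(2 * n) choose n = Z"
    unfolding X_def Z_def mn by (simp_all del: binomial_Suc_Suc add: mult_2)
  have D: "(of_nat (m + n) :: rat) = 2 * of_nat p + 2" "(of_nat (n+1) :: rat) = of_nat p + 2"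
     "int (m+n+1) = 2 * int p + 3" unfolding mn by simp_all
  have p2: "(of_nat p + 2 :: rat) \<noteq> 0" using of_nat_0_le_iff[of p, where 'a=rat] by linarith
  show ?thesis unfolding S B D X_def[symmetric]
    unfolding of_int_mult of_int_power of_int_of_nat_eq of_int_add of_int_numeral
    apply (rule algQ1[where p="of_nat p"])
    subgoal using of_nat_0_le_iff[of p, where 'a=rat] by linarith
    subgoal using of_nat_0_le_iff[of p, where 'a=rat] by linarith
    subgoal by (rule refl)
    subgoal by (rule refl)
    subgoal by (rule Zv)
    subgoal by simp
    subgoal by simp
    subgoal by simp
    done
qed


theorem lemma3:
  fixes m n :: nat
  assumes "m + n \<ge> 1"
  shows "\<exists>k :: int.
    (of_nat ((m + n) choose m) * of_nat ((n + 1) choose m) * of_nat ((2 * n) choose n)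
       * (of_nat (3 * m^2 + n^2 + m + n) / (of_nat (m + n) * of_nat (n + 1))) :: rat)
    = of_int (int (m + n + 1) * k)"
proof (cases "m = 0")
  case True
  then have "n \<ge> 1" using assms by simp
  from case0[OF this, folded True] show ?thesis by (rule exI)
next
  case False
  then obtain p where mp: "m = Suc p" by (cases m) auto
  show ?thesis
  proof (cases "m > n + 1")
    case True
    then have "(n + 1) choose m = 0" by simp
    then show ?thesis by (intro exI[of _ 0]) simp
  next
    case False
    then have "p \<le> n" using mp by simp
    then obtain q where nq: "n = p + q" using le_Suc_ex by blast
    show ?thesis
    proof (cases q)
      case 0
      then have "n = p" using nq by simp
      from caseQ0[OF mp this] show ?thesis by (rule exI)
    next
      case (Suc q')
      show ?thesis
      proof (cases q')
        case 0
        then have "n = Suc p" using nq Suc by simp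
        from caseQ1[OF mp this] show ?thesis by (rule exI)
      next
        case (Suc r)
        then have "n = p + r + 2" using nq \<open>q = Suc q'\<close> by simp
        from caseR[OF mp this] show ?thesis by (rule exI)
      qed
    qed
  qed
qed

end
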